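(* Let $G$ be a graph that contains an induced $(n,m)$-necklace with $n\ge 5$ and $m\ge 1$ whose cycle has good neighbours in $G$. Then $G$ diverges under the operator $KB_e$, i.e. $\lim_{k\to\infty}|V(KB_e^k(G))|=\infty$.
   Context: All graphs are finite, simple and undirected. A biclique of a graph $G$ is a maximal (with respect to inclusion) induced subgraph of $G$ that is a complete bipartite graph $K_{p,q}$ with $p,q\ge 1$. The edge-biclique graph $KB_e(G)$ has one vertex for each biclique of $G$, two distinct vertices being adjacent iff the corresponding bicliques share at least one edge; $KB_e^0(G)=G$, $KB_e^k(G)=KB_e(KB_e^{k-1}(G))$. For $n\ge3$, $m\ge1$, the $(n,m)$-necklace is the graph on $n+m$ vertices consisting of an induced cycle $C_n$ and a complete graph $K_m$ such that, for one fixed edge $xy$ of the cycle, every vertex of the $K_m$ is adjacent to $x$ and $y$ and to no other vertex of the cycle. An induced cycle $C=v_0\ldots v_{n-1}$ ($n\ge5$) of a graph $H$ has good neighbours in $H$ if for every vertex $v\in V(H)\setminus V(C)$ and every $i$ (indices mod $n$), $\{v_{i-1},v_{i+1}\}\subseteq N(v)$ implies $v_i\in N(v)$. *)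

theory Defs
  imports Main
begin

type_synonym 'a graph = "'a set \<times> 'a set set"

definition verts :: "'a graph \<Rightarrow> 'a set" where "verts G = fst G"
definition edges :: "'a graph \<Rightarrow> 'a set set" where "edges G = snd G"

definition adj :: "'a graph \<Rightarrow> 'a \<Rightarrow> 'a \<Rightarrow> bool" where
  "adj G x y \<longleftrightarrow> {x, y} \<in> edges G"

definition wf_graph :: "'a graph \<Rightarrow> bool" where
  "wf_graph G \<longleftrightarrow> finite (verts G) \<and> (\<forall>e\<in>edges G. e \<subseteq> verts G \<and> card e = 2)"

definition induces_complete_bipartite :: "'a graph \<Rightarrow> 'a set \<Rightarrow> bool" where
  "induces_complete_bipartite G B \<longleftrightarrow> B \<subseteq> verts G \<and>
     (\<exists>X Y. X \<noteq> {} \<and> Y \<noteq> {} \<and> X \<inter> Y = {} \<and> X \<union> Y = B \<and>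
        (\<forall>x\<in>X. \<forall>y\<in>Y. adj G x y) \<and>
        (\<forall>x\<in>X. \<forall>x'\<in>X. \<not> adj G x x') \<and>
        (\<forall>y\<in>Y. \<forall>y'\<in>Y. \<not> adj G y y'))"

definition is_biclique :: "'a graph \<Rightarrow> 'a set \<Rightarrow> bool" where
  "is_biclique G B \<longleftrightarrow> induces_complete_bipartite G B \<and>
     (\<forall>B'. B \<subset> B' \<longrightarrow> \<not> induces_complete_bipartite G B')"

definition KBe :: "'a graph \<Rightarrow> 'a set graph" where
  "KBe G = ({B. is_biclique G B},
            {{B1, B2} | B1 B2. is_biclique G B1 \<and> is_biclique G B2 \<and> B1 \<noteq> B2 \<and>
                (\<exists>e\<in>edges G. e \<subseteq> B1 \<inter> B2)})"

text \<open>Relabel a finite graph isomorphically onto the vertex set {0..<card V} (so that the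
  operator can be iterated within one type; the number of vertices is unaffected).\<close>
definition relabel :: "'a graph \<Rightarrow> nat graph" where
  "relabel G = (let f = (SOME f. bij_betw f (verts G) {..<card (verts G)})
                in (f ` verts G, (\<lambda>e. f ` e) ` edges G))"

text \<open>KBe_iter k G is (an isomorphic copy of) KB_e^k(G).\<close>
fun KBe_iter :: "nat \<Rightarrow> 'a graph \<Rightarrow> nat graph" where
  "KBe_iter 0 G = relabel G"
| "KBe_iter (Suc k) G = relabel (KBe (KBe_iter k G))"

text \<open>G contains an induced (n,m)-necklace with cycle c 0 ... c (n-1) and clique K,
  the clique being attached to the cycle edge c 0 c 1.\<close>
definition induced_necklace :: "'a graph \<Rightarrow> nat \<Rightarrow> nat \<Rightarrow> (nat \<Rightarrow> 'a) \<Rightarrow> 'a set \<Rightarrow> bool" where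
  "induced_necklace G n m c K \<longleftrightarrow>
     n \<ge> 3 \<and> m \<ge> 1 \<and>
     inj_on c {..<n} \<and> c ` {..<n} \<subseteq> verts G \<and>
     K \<subseteq> verts G \<and> finite K \<and> card K = m \<and> K \<inter> c ` {..<n} = {} \<and>
     (\<forall>i<n. \<forall>j<n. adj G (c i) (c j) \<longleftrightarrow> (j = (i + 1) mod n \<or> i = (j + 1) mod n)) \<and>
     (\<forall>x\<in>K. \<forall>y\<in>K. x \<noteq> y \<longrightarrow> adj G x y) \<and>
     (\<forall>x\<in>K. \<forall>i<n. adj G x (c i) \<longleftrightarrow> (i = 0 \<or> i = 1))"

definition good_neighbours :: "'a graph \<Rightarrow> nat \<Rightarrow> (nat \<Rightarrow> 'a) \<Rightarrow> bool" where
  "good_neighbours G n c \<longleftrightarrow>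
     (\<forall>v\<in>verts G - c ` {..<n}. \<forall>i<n.
        adj G v (c ((i + n - 1) mod n)) \<and> adj G v (c ((i + 1) mod n)) \<longrightarrow> adj G v (c i))"

end

theory Submission
  imports Defs
begin


lemma adj_sym: "adj H u v \<longleftrightarrow> adj H v u"
  unfolding adj_def by (simp add: insert_commute)

lemma adj_irrefl: "wf_graph H \<Longrightarrow> \<not> adj H u u"
  unfolding adj_def wf_graph_def by fastforce

lemma adj_verts: "wf_graph H \<Longrightarrow> adj H u v \<Longrightarrow> u \<in> verts H \<and> v \<in> verts H"
  unfolding adj_def wf_graph_def by blast

lemma icb_parity:
  assumes "induces_complete_bipartite H B" "u \<in> B" "v \<in> B" "w \<in> B" "wf_graph H"
  shows "adj H u w \<longleftrightarrow> (adj H u v \<longleftrightarrow> \<not> adj H v w)"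
proof -
  obtain X Y where XY: "X \<inter> Y = {}" "X \<union> Y = B" "\<forall>x\<in>X. \<forall>y\<in>Y. adj H x y"
    "\<forall>x\<in>X. \<forall>x'\<in>X. \<not> adj H x x'" "\<forall>y\<in>Y. \<forall>y'\<in>Y. \<not> adj H y y'"
    using assms(1) unfolding induces_complete_bipartite_def by blast
  have s: "\<And>a b. adj H a b = adj H b a" by (rule adj_sym)
  have key: "adj H a b \<longleftrightarrow> (a \<in> X \<longleftrightarrow> b \<in> Y)" if "a \<in> B" "b \<in> B" for a b
  proof (cases "a \<in> X")
    case True
    then have "a \<notin> Y" using XY(1) by blast
    show ?thesis
    proof (cases "b \<in> Y")
      case True then show ?thesis using \<open>a \<in> X\<close> XY(3) by blast
    next
      case False then have "b \<in> X" using XY(2) that by blast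
      then show ?thesis using \<open>a \<in> X\<close> XY(4) False by blast
    qed
  next
    case False
    then have "a \<in> Y" using XY(2) that by blast
    show ?thesis
    proof (cases "b \<in> Y")
      case True then show ?thesis using \<open>a \<in> Y\<close> XY(5) False by blast
    next
      case False then have "b \<in> X" using XY(2) that by blast
      then show ?thesis using \<open>a \<in> Y\<close> XY(3) s False \<open>a \<notin> X\<close> by blast
    qed
  qed
  have k1: "adj H u w \<longleftrightarrow> (u \<in> X \<longleftrightarrow> w \<in> Y)" using key assms by blast
  have k2: "adj H u v \<longleftrightarrow> (u \<in> X \<longleftrightarrow> v \<in> Y)" using key assms by blast
  have k3: "adj H v w \<longleftrightarrow> (v \<in> X \<longleftrightarrow> w \<in> Y)" using key assms by blast
  have d: "\<And>a. a \<in> B \<Longrightarrow> (a \<in> X \<longleftrightarrow> a \<notin> Y)" using XY(1,2) by blast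
  show ?thesis unfolding k1 k2 k3 using d assms(2-4) by blast
qed

lemma bic_icb: "is_biclique H B \<Longrightarrow> induces_complete_bipartite H B"
  unfolding is_biclique_def by blast

lemma bic_parity:
  assumes "is_biclique H B" "u \<in> B" "v \<in> B" "w \<in> B" "wf_graph H"
  shows "adj H u w \<longleftrightarrow> (adj H u v \<longleftrightarrow> \<not> adj H v w)"
  using icb_parity[OF bic_icb[OF assms(1)] assms(2-5)] .

lemma icb_star3:
  assumes "adj H m a" "adj H m b" "\<not> adj H a b" "a \<noteq> b" "wf_graph H"
  shows "induces_complete_bipartite H {m, a, b}"
proof -
  have v: "m \<in> verts H" "a \<in> verts H" "b \<in> verts H"
    using adj_verts[OF assms(5) assms(1)] adj_verts[OF assms(5) assms(2)] by auto
  have ma: "m \<noteq> a" "m \<noteq> b" using assms adj_irrefl by metis+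
  show ?thesis unfolding induces_complete_bipartite_def
    apply (rule conjI) using v apply blast
    apply (rule exI[of _ "{m}"], rule exI[of _ "{a,b}"])
    using assms ma adj_irrefl[OF assms(5)] adj_sym[of H b a] adj_sym[of H a m] adj_sym[of H b m] by auto
qed

lemma exists_biclique:
  assumes "wf_graph H" "induces_complete_bipartite H S"
  shows "\<exists>B. is_biclique H B \<and> S \<subseteq> B"
proof -
  let ?F = "{B. S \<subseteq> B \<and> induces_complete_bipartite H B}"
  have "?F \<subseteq> Pow (verts H)" unfolding induces_complete_bipartite_def by blast
  moreover have "finite (verts H)" using assms(1) unfolding wf_graph_def by blast
  ultimately have fin: "finite ?F" by (meson finite_Pow_iff finite_subset)
  have "S \<in> ?F" using assms(2) by blast
  then obtain M where M: "M \<in> ?F" "\<forall>b\<in>?F. M \<le> b \<longrightarrow> M = b"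
    using finite_has_maximal[OF fin] by blast
  have "is_biclique H M" unfolding is_biclique_def
  proof (intro conjI allI impI)
    show "induces_complete_bipartite H M" using M by blast
  next
    fix B' assume "M \<subset> B'"
    then show "\<not> induces_complete_bipartite H B'" using M by blast
  qed
  then show ?thesis using M by blast
qed

definition shares :: "'a graph \<Rightarrow> 'a set \<Rightarrow> 'a set \<Rightarrow> bool" where
  "shares H B1 B2 \<longleftrightarrow> (\<exists>u\<in>B1 \<inter> B2. \<exists>v\<in>B1 \<inter> B2. adj H u v)"

lemma ex_edge_iff:
  assumes "wf_graph H"
  shows "(\<exists>e\<in>edges H. e \<subseteq> B1 \<inter> B2) \<longleftrightarrow> shares H B1 B2"
proof
  assume "\<exists>e\<in>edges H. e \<subseteq> B1 \<inter> B2"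
  then obtain e where e: "e \<in> edges H" "e \<subseteq> B1 \<inter> B2" by blast
  then have "card e = 2" using assms unfolding wf_graph_def by blast
  then obtain x y where xy: "e = {x,y}" "x \<noteq> y" unfolding card_2_iff by blast
  have "adj H x y" unfolding adj_def using e(1) xy(1) by simp
  moreover have "x \<in> B1 \<inter> B2" "y \<in> B1 \<inter> B2" using e(2) xy(1) by auto
  ultimately show "shares H B1 B2" unfolding shares_def by blast
next
  assume "shares H B1 B2"
  then obtain u v where uv: "u \<in> B1 \<inter> B2" "v \<in> B1 \<inter> B2" "adj H u v" unfolding shares_def by blast
  have "{u,v} \<in> edges H" using uv(3) unfolding adj_def .
  moreover have "{u,v} \<subseteq> B1 \<inter> B2" using uv by auto
  ultimately show "\<exists>e\<in>edges H. e \<subseteq> B1 \<inter> B2" by blast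
qed

lemma verts_KBe: "verts (KBe H) = {B. is_biclique H B}"
  unfolding KBe_def verts_def by simp

lemma adj_KBe:
  assumes "wf_graph H"
  shows "adj (KBe H) B1 B2 \<longleftrightarrow> is_biclique H B1 \<and> is_biclique H B2 \<and> B1 \<noteq> B2 \<and> shares H B1 B2"
proof
  assume "adj (KBe H) B1 B2"
  then have "{B1,B2} \<in> {{C1, C2} | C1 C2. is_biclique H C1 \<and> is_biclique H C2 \<and> C1 \<noteq> C2 \<and>
                (\<exists>e\<in>edges H. e \<subseteq> C1 \<inter> C2)}"
    unfolding adj_def KBe_def edges_def by (simp only: snd_conv)
  then have "\<exists>C1 C2. {B1,B2} = {C1, C2} \<and> is_biclique H C1 \<and> is_biclique H C2 \<and> C1 \<noteq> C2 \<and>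
                (\<exists>e\<in>edges H. e \<subseteq> C1 \<inter> C2)" by (simp only: mem_Collect_eq)
  then obtain C1 C2 where C: "{B1,B2} = {C1,C2}" "is_biclique H C1" "is_biclique H C2" "C1 \<noteq> C2"
                "(\<exists>e\<in>edges H. e \<subseteq> C1 \<inter> C2)" by (elim exE conjE) (rule that)
  have sh: "shares H C1 C2" using C(5) ex_edge_iff[OF assms, of C1 C2] by simp
  have "(B1 = C1 \<and> B2 = C2) \<or> (B1 = C2 \<and> B2 = C1)" using C(1) by (simp only: doubleton_eq_iff)
  then show "is_biclique H B1 \<and> is_biclique H B2 \<and> B1 \<noteq> B2 \<and> shares H B1 B2"
  proof
    assume "B1 = C1 \<and> B2 = C2" then show ?thesis using C sh by simp
  next
    assume "B1 = C2 \<and> B2 = C1" then show ?thesis using C sh unfolding shares_def by (simp add: Int_commute)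
  qed
next
  assume a: "is_biclique H B1 \<and> is_biclique H B2 \<and> B1 \<noteq> B2 \<and> shares H B1 B2"
  then have e: "\<exists>e\<in>edges H. e \<subseteq> B1 \<inter> B2" using ex_edge_iff[OF assms] by simp
  have "\<exists>C1 C2. {B1,B2} = {C1, C2} \<and> is_biclique H C1 \<and> is_biclique H C2 \<and> C1 \<noteq> C2 \<and>
                (\<exists>e\<in>edges H. e \<subseteq> C1 \<inter> C2)"
    apply (rule exI[of _ B1], rule exI[of _ B2]) using a e by simp
  then have "{B1,B2} \<in> {{C1, C2} | C1 C2. is_biclique H C1 \<and> is_biclique H C2 \<and> C1 \<noteq> C2 \<and>
                (\<exists>e\<in>edges H. e \<subseteq> C1 \<inter> C2)}" by (simp only: mem_Collect_eq)
  then show "adj (KBe H) B1 B2" unfolding adj_def KBe_def edges_def by (simp only: snd_conv)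
qed

lemma wf_KBe: assumes "wf_graph H" shows "wf_graph (KBe H)"
proof -
  have "verts (KBe H) \<subseteq> Pow (verts H)"
    unfolding verts_KBe is_biclique_def induces_complete_bipartite_def by blast
  moreover have "finite (verts H)" using assms unfolding wf_graph_def by blast
  ultimately have f: "finite (verts (KBe H))" by (meson finite_Pow_iff finite_subset)
  have "\<forall>e\<in>edges (KBe H). e \<subseteq> verts (KBe H) \<and> card e = 2"
    unfolding KBe_def edges_def verts_def by (auto simp: card_2_iff)
  then show ?thesis using f unfolding wf_graph_def by blast
qed



definition cyc :: "'a graph \<Rightarrow> nat \<Rightarrow> (nat \<Rightarrow> 'a) \<Rightarrow> bool" where
  "cyc H n c \<longleftrightarrow> 5 \<le> n \<and> inj_on c {..<n} \<and> c ` {..<n} \<subseteq> verts H \<and>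
     (\<forall>i<n. \<forall>j<n. adj H (c i) (c j) \<longleftrightarrow> (j = (i + 1) mod n \<or> i = (j + 1) mod n)) \<and>
     good_neighbours H n c"

lemma suc_eq: "(i::nat) < n \<Longrightarrow> (i + 1) mod n = (if i + 1 = n then 0 else i + 1)"
proof (cases "i + 1 = n")
  case True then show ?thesis by (metis mod_self)
next
  case False
  assume "i < n" then have "i + 1 < n" using False by linarith
  then show ?thesis using False by simp
qed

lemma pr_eq: "(i::nat) < n \<Longrightarrow> (i + n - 1) mod n = (if i = 0 then n - 1 else i - 1)"
proof (cases "i = 0")
  case True
  assume "i < n" then have "n - 1 < n" by linarith
  then show ?thesis using True by simp
next
  case False
  assume "i < n"
  then have e: "i + n - 1 = (i - 1) + n" using False by simp
  have "(i + n - 1) mod n = ((i - 1) + n) mod n" by (simp only: e)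
  also have "\<dots> = (i - 1) mod n" by simp
  also have "\<dots> = i - 1" using \<open>i < n\<close> by simp
  finally show ?thesis using False by simp
qed

lemma cyc_adj:
  assumes "cyc H n c" "i < n" "j < n"
  shows "adj H (c i) (c j) \<longleftrightarrow> (j = i + 1 \<or> i = j + 1 \<or> (i = 0 \<and> j = n - 1) \<or> (j = 0 \<and> i = n - 1))"
proof -
  have "adj H (c i) (c j) \<longleftrightarrow> (j = (i + 1) mod n \<or> i = (j + 1) mod n)"
    using assms unfolding cyc_def by blast
  also have "\<dots> \<longleftrightarrow> (j = i + 1 \<or> i = j + 1 \<or> (i = 0 \<and> j = n - 1) \<or> (j = 0 \<and> i = n - 1))"
    using assms(2,3) suc_eq[of i n] suc_eq[of j n] by auto
  finally show ?thesis .
qed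

lemma cyc_props:
  assumes "cyc H n c"
  shows "5 \<le> n" "inj_on c {..<n}" "\<And>i. i < n \<Longrightarrow> c i \<in> verts H"
    "\<And>v i. v \<in> verts H \<Longrightarrow> v \<notin> c ` {..<n} \<Longrightarrow> i < n \<Longrightarrow>
        adj H v (c ((i + n - 1) mod n)) \<Longrightarrow> adj H v (c ((i + 1) mod n)) \<Longrightarrow> adj H v (c i)"
proof -
  show "5 \<le> n" "inj_on c {..<n}" using assms unfolding cyc_def by blast+
  show "\<And>i. i < n \<Longrightarrow> c i \<in> verts H" using assms unfolding cyc_def by blast
  have g: "good_neighbours H n c" using assms unfolding cyc_def by blast
  show "\<And>v i. v \<in> verts H \<Longrightarrow> v \<notin> c ` {..<n} \<Longrightarrow> i < n \<Longrightarrow>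
        adj H v (c ((i + n - 1) mod n)) \<Longrightarrow> adj H v (c ((i + 1) mod n)) \<Longrightarrow> adj H v (c i)"
    using g unfolding good_neighbours_def by blast
qed

lemma cyc_inj: "cyc H n c \<Longrightarrow> i < n \<Longrightarrow> j < n \<Longrightarrow> c i = c j \<longleftrightarrow> i = j"
  using cyc_props(2) by (metis inj_on_def lessThan_iff)

lemma common_nb:
  assumes "cyc H n c" "i < n" "k < n"
    "adj H (c k) (c ((i + n - 1) mod n))" "adj H (c k) (c ((i + 1) mod n))"
  shows "k = i"
proof -
  have n: "5 \<le> n" using cyc_props(1)[OF assms(1)] .
  have a: "(i + n - 1) mod n < n" "(i + 1) mod n < n" using n by auto
  have p: "(i + n - 1) mod n = (if i = 0 then n - 1 else i - 1)" using pr_eq[OF assms(2)] .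
  have s: "(i + 1) mod n = (if i + 1 = n then 0 else i + 1)" using suc_eq[OF assms(2)] .
  show ?thesis using assms(4,5) cyc_adj[OF assms(1) assms(3) a(1)] cyc_adj[OF assms(1) assms(3) a(2)] p s n assms(2,3)
    by (auto split: if_splits)
qed

lemma star_center:
  assumes "wf_graph H" "cyc H n c" "is_biclique H B" "i < n"
    "{c ((i + n - 1) mod n), c i, c ((i + 1) mod n)} \<subseteq> B" "w \<in> B" "w \<noteq> c i"
  shows "adj H w (c i)"
proof (rule ccontr)
  assume na: "\<not> adj H w (c i)"
  have n: "5 \<le> n" using cyc_props(1)[OF assms(2)] .
  have a1: "adj H w (c ((i + n - 1) mod n))"
    using bic_parity[OF assms(3) assms(6) _ _ assms(1), of "c i" "c ((i + n - 1) mod n)"] assms(5) na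
      cyc_adj[OF assms(2) assms(4), of "(i + n - 1) mod n"] pr_eq[OF assms(4)] n assms(4)
    by (auto split: if_splits)
  have a2: "adj H w (c ((i + 1) mod n))"
    using bic_parity[OF assms(3) assms(6) _ _ assms(1), of "c i" "c ((i + 1) mod n)"] assms(5) na
      cyc_adj[OF assms(2) assms(4), of "(i + 1) mod n"] suc_eq[OF assms(4)] n assms(4)
    by (auto split: if_splits)
  have wv: "w \<in> verts H" using assms(3,6) unfolding is_biclique_def induces_complete_bipartite_def by blast
  show False
  proof (cases "w \<in> c ` {..<n}")
    case True
    then obtain k where k: "k < n" "w = c k" by blast
    then have "k = i" using common_nb[OF assms(2) assms(4) k(1)] a1 a2 by simp
    then show False using k assms(7) by simp
  next
    case False
    then show False using cyc_props(4)[OF assms(2) wv False assms(4) a1 a2] na by simp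
  qed
qed

lemma star_edges:
  assumes "wf_graph H" "cyc H n c" "is_biclique H B" "i < n"
    "{c ((i + n - 1) mod n), c i, c ((i + 1) mod n)} \<subseteq> B" "u \<in> B" "v \<in> B" "adj H u v"
  shows "u = c i \<or> v = c i"
proof (rule ccontr)
  assume "\<not> (u = c i \<or> v = c i)"
  then have "adj H u (c i)" "adj H v (c i)" using star_center[OF assms(1-5)] assms(6,7) by auto
  moreover have "c i \<in> B" using assms(5) by blast
  ultimately show False using bic_parity[OF assms(3) assms(6) _ assms(7) assms(1), of "c i"] assms(8) adj_sym by metis
qed



lemma idx:
  fixes i n :: nat
  assumes "i < n" "5 \<le> n"
  shows "(i + n - 1) mod n < n" "(i + 1) mod n < n"
    "((i + n - 1) mod n + 1) mod n = i" "((i + 1) mod n + n - 1) mod n = i"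
    "(i + n - 1) mod n \<noteq> (i + 1) mod n" "(i + n - 1) mod n \<noteq> i" "(i + 1) mod n \<noteq> i"
proof -
  show a: "(i + n - 1) mod n < n" "(i + 1) mod n < n" using assms by auto
  have p: "(i + n - 1) mod n = (if i = 0 then n - 1 else i - 1)" using pr_eq[OF assms(1)] .
  have s: "(i + 1) mod n = (if i + 1 = n then 0 else i + 1)" using suc_eq[OF assms(1)] .
  show "((i + n - 1) mod n + 1) mod n = i" using suc_eq[OF a(1)] p assms by auto
  show "((i + 1) mod n + n - 1) mod n = i" using pr_eq[OF a(2)] s assms by auto
  show "(i + n - 1) mod n \<noteq> (i + 1) mod n" "(i + n - 1) mod n \<noteq> i" "(i + 1) mod n \<noteq> i"
    using p s assms by auto
qed

lemma idx_back:
  fixes i j n :: nat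
  assumes "i < n" "j < n" "5 \<le> n" "i = (j + 1) mod n"
  shows "j = (i + n - 1) mod n"
  using idx(4)[OF assms(2,3)] assms(4) by simp

lemma cyc_nbrs:
  assumes "cyc H n c" "i < n"
  shows "adj H (c i) (c ((i + n - 1) mod n))" "adj H (c i) (c ((i + 1) mod n))"
    "\<not> adj H (c ((i + n - 1) mod n)) (c ((i + 1) mod n))"
    "c ((i + n - 1) mod n) \<noteq> c ((i + 1) mod n)"
    "c ((i + n - 1) mod n) \<noteq> c i" "c ((i + 1) mod n) \<noteq> c i"
proof -
  have n: "5 \<le> n" using cyc_props(1)[OF assms(1)] .
  note I = idx[OF assms(2) n]
  have A: "\<forall>i<n. \<forall>j<n. adj H (c i) (c j) \<longleftrightarrow> (j = (i + 1) mod n \<or> i = (j + 1) mod n)"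
    using assms(1) unfolding cyc_def by blast
  show "adj H (c i) (c ((i + n - 1) mod n))" using A assms(2) I by metis
  show "adj H (c i) (c ((i + 1) mod n))" using A assms(2) I by metis
  have p: "(i + n - 1) mod n = (if i = 0 then n - 1 else i - 1)" using pr_eq[OF assms(2)] .
  have s: "(i + 1) mod n = (if i + 1 = n then 0 else i + 1)" using suc_eq[OF assms(2)] .
  show "\<not> adj H (c ((i + n - 1) mod n)) (c ((i + 1) mod n))"
    using cyc_adj[OF assms(1) I(1) I(2)] p s n assms(2) by (auto split: if_splits)
  show "c ((i + n - 1) mod n) \<noteq> c ((i + 1) mod n)" "c ((i + n - 1) mod n) \<noteq> c i" "c ((i + 1) mod n) \<noteq> c i"
    using cyc_inj[OF assms(1)] I assms(2) by auto
qed

definition cp :: "'a graph \<Rightarrow> nat \<Rightarrow> (nat \<Rightarrow> 'a) \<Rightarrow> nat \<Rightarrow> 'a set" where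
  "cp H n c i = (SOME B. is_biclique H B \<and> {c ((i + n - 1) mod n), c i, c ((i + 1) mod n)} \<subseteq> B)"

lemma cp_spec:
  assumes "wf_graph H" "cyc H n c" "i < n"
  shows "is_biclique H (cp H n c i)" "{c ((i + n - 1) mod n), c i, c ((i + 1) mod n)} \<subseteq> cp H n c i"
proof -
  note N = cyc_nbrs[OF assms(2,3)]
  have "induces_complete_bipartite H {c i, c ((i + n - 1) mod n), c ((i + 1) mod n)}"
    using icb_star3[OF N(1) N(2) N(3) N(4) assms(1)] .
  then have "\<exists>B. is_biclique H B \<and> {c ((i + n - 1) mod n), c i, c ((i + 1) mod n)} \<subseteq> B"
    using exists_biclique[OF assms(1)] by (metis insert_commute)
  then have "is_biclique H (cp H n c i) \<and> {c ((i + n - 1) mod n), c i, c ((i + 1) mod n)} \<subseteq> cp H n c i"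
    unfolding cp_def by (rule someI_ex)
  then show "is_biclique H (cp H n c i)" "{c ((i + n - 1) mod n), c i, c ((i + 1) mod n)} \<subseteq> cp H n c i"
    by auto
qed

lemma cp_edges:
  assumes "wf_graph H" "cyc H n c" "i < n" "u \<in> cp H n c i" "v \<in> cp H n c i" "adj H u v"
  shows "u = c i \<or> v = c i"
  using star_edges[OF assms(1,2) cp_spec(1)[OF assms(1-3)] assms(3) cp_spec(2)[OF assms(1-3)] assms(4-6)] .

lemma cp_center:
  assumes "wf_graph H" "cyc H n c" "i < n" "w \<in> cp H n c i" "w \<noteq> c i"
  shows "adj H w (c i)"
  using star_center[OF assms(1,2) cp_spec(1)[OF assms(1-3)] assms(3) cp_spec(2)[OF assms(1-3)] assms(4,5)] .

lemma adj_cp_center: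
  assumes "wf_graph H" "cyc H n c" "i < n" "adj (KBe H) B (cp H n c i)"
  shows "c i \<in> B"
proof -
  have "shares H B (cp H n c i)" using assms(4) adj_KBe[OF assms(1)] by blast
  then obtain u v where "u \<in> B" "v \<in> B" "u \<in> cp H n c i" "v \<in> cp H n c i" "adj H u v"
    unfolding shares_def by blast
  then show ?thesis using cp_edges[OF assms(1-3)] by metis
qed

lemma adj_KBe_intro:
  assumes "wf_graph H" "is_biclique H B1" "is_biclique H B2" "B1 \<noteq> B2"
    "u \<in> B1" "u \<in> B2" "v \<in> B1" "v \<in> B2" "adj H u v"
  shows "adj (KBe H) B1 B2"
  using assms adj_KBe[OF assms(1)] unfolding shares_def by blast

lemma cp_inj:
  assumes "wf_graph H" "cyc H n c" "i < n" "j < n" "cp H n c i = cp H n c j"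
  shows "i = j"
proof (rule ccontr)
  assume ij: "i \<noteq> j"
  have n: "5 \<le> n" using cyc_props(1)[OF assms(2)] .
  note I = idx[OF assms(3) n]
  note S = cp_spec(2)[OF assms(1-3)]
  note N = cyc_nbrs[OF assms(2,3)]
  have "c i = c j \<or> c ((i + 1) mod n) = c j"
    using cp_edges[OF assms(1,2,4), of "c i" "c ((i + 1) mod n)"] S N assms(5) by auto
  then have j1: "j = (i + 1) mod n" using cyc_inj[OF assms(2)] I assms(3,4) ij by metis
  have "c ((i + n - 1) mod n) = c j \<or> c i = c j"
    using cp_edges[OF assms(1,2,4), of "c ((i + n - 1) mod n)" "c i"] S N assms(5) adj_sym by (metis insert_subset)
  then have j2: "j = (i + n - 1) mod n" using cyc_inj[OF assms(2)] I assms(3,4) ij by metis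
  show False using j1 j2 I by simp
qed

lemma cyc_KBe:
  assumes "wf_graph H" "cyc H n c"
  shows "cyc (KBe H) n (cp H n c)"
proof -
  have n: "5 \<le> n" using cyc_props(1)[OF assms(2)] .
  have inj: "inj_on (cp H n c) {..<n}" using cp_inj[OF assms] by (meson inj_onI lessThan_iff)
  have vs: "cp H n c ` {..<n} \<subseteq> verts (KBe H)" unfolding verts_KBe using cp_spec(1)[OF assms] by blast
  have adjH: "adj (KBe H) (cp H n c i) (cp H n c j) \<longleftrightarrow> adj H (c i) (c j)" if ij: "i < n" "j < n" for i j
  proof
    assume a: "adj (KBe H) (cp H n c i) (cp H n c j)"
    then have ne: "cp H n c i \<noteq> cp H n c j" "shares H (cp H n c i) (cp H n c j)" using adj_KBe[OF assms(1)] by auto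
    then have "i \<noteq> j" by blast
    then have cne: "c i \<noteq> c j" using cyc_inj[OF assms(2)] ij by blast
    obtain u v where uv: "u \<in> cp H n c i" "v \<in> cp H n c i" "u \<in> cp H n c j" "v \<in> cp H n c j" "adj H u v"
      using ne(2) unfolding shares_def by blast
    have "u = c i \<or> v = c i" "u = c j \<or> v = c j"
      using cp_edges[OF assms ij(1) uv(1,2,5)] cp_edges[OF assms ij(2) uv(3,4,5)] by auto
    then show "adj H (c i) (c j)" using uv(5) cne adj_sym by metis
  next
    assume a: "adj H (c i) (c j)"
    then have "i \<noteq> j" using adj_irrefl[OF assms(1)] by blast
    then have ne: "cp H n c i \<noteq> cp H n c j" using cp_inj[OF assms ij] by blast
    have "j = (i + 1) mod n \<or> i = (j + 1) mod n" using a assms(2) ij unfolding cyc_def by blast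
    then have "j = (i + 1) mod n \<or> j = (i + n - 1) mod n" using idx_back[OF ij n] by blast
    then have cj: "c j \<in> cp H n c i" using cp_spec(2)[OF assms ij(1)] by blast
    have "i = (j + 1) mod n \<or> j = (i + 1) mod n" using a assms(2) ij unfolding cyc_def by blast
    then have "i = (j + 1) mod n \<or> i = (j + n - 1) mod n" using idx_back[OF ij(2,1) n] by blast
    then have ci: "c i \<in> cp H n c j" using cp_spec(2)[OF assms ij(2)] by blast
    have ci2: "c i \<in> cp H n c i" "c j \<in> cp H n c j" using cp_spec(2)[OF assms ij(1)] cp_spec(2)[OF assms ij(2)] by auto
    show "adj (KBe H) (cp H n c i) (cp H n c j)"
      using adj_KBe_intro[OF assms(1) cp_spec(1)[OF assms ij(1)] cp_spec(1)[OF assms ij(2)] ne ci2(1) ci cj ci2(2) a] .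
  qed
  have gn: "good_neighbours (KBe H) n (cp H n c)"
    unfolding good_neighbours_def
  proof (intro ballI allI impI)
    fix B i
    assume B: "B \<in> verts (KBe H) - cp H n c ` {..<n}" and i: "i < n"
      and aa: "adj (KBe H) B (cp H n c ((i + n - 1) mod n)) \<and> adj (KBe H) B (cp H n c ((i + 1) mod n))"
    note I = idx[OF i n]
    define p where "p = (i + n - 1) mod n"
    define s where "s = (i + 1) mod n"
    have ps: "p < n" "s < n" "(p + 1) mod n = i" using I unfolding p_def s_def by auto
    have Bb: "is_biclique H B" using B verts_KBe by blast
    have Bne: "B \<noteq> cp H n c i" using B i by blast
    have a1: "adj (KBe H) B (cp H n c p)" using aa p_def by simp
    have a2: "adj (KBe H) B (cp H n c s)" using aa s_def by simp
    have cs: "c s \<in> B" using adj_cp_center[OF assms ps(2) a2] .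
    obtain u v where uv: "u \<in> B" "v \<in> B" "u \<in> cp H n c p" "v \<in> cp H n c p" "adj H u v"
      using a1 adj_KBe[OF assms(1)] unfolding shares_def by blast
    have "\<exists>l. l \<in> B \<and> l \<in> cp H n c p \<and> c p \<in> B \<and> adj H (c p) l"
      using cp_edges[OF assms ps(1) uv(3,4,5)] uv adj_sym by metis
    then obtain l where l: "l \<in> B" "l \<in> cp H n c p" "c p \<in> B" "adj H (c p) l" by blast
    have nps: "\<not> adj H (c p) (c s)" using cyc_nbrs(3)[OF assms(2) i] p_def s_def by simp
    have ls: "adj H l (c s)"
      using bic_parity[OF Bb l(1) l(3) cs assms(1)] l(4) nps adj_sym by metis
    have lp: "adj H l (c p)" using l(4) adj_sym by metis
    show "adj (KBe H) B (cp H n c i)"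
    proof (cases "l = c i")
      case True
      have "c p \<in> cp H n c i" "c i \<in> cp H n c i" using cp_spec(2)[OF assms i] p_def by auto
      moreover have "adj H (c p) (c i)" using cyc_nbrs(1)[OF assms(2) i] p_def adj_sym by metis
      ultimately show ?thesis
        using adj_KBe_intro[OF assms(1) Bb cp_spec(1)[OF assms i] Bne] l(1,3) True by blast
    next
      case False
      have ci_in: "c i \<in> cp H n c p" using cp_spec(2)[OF assms ps(1)] ps(3) by auto
      have lne: "l \<noteq> c p" using l(4) adj_irrefl[OF assms(1)] by blast
      have cine: "c i \<noteq> c p" using cyc_nbrs(5)[OF assms(2) i] p_def by simp
      have nli: "\<not> adj H l (c i)" using cp_edges[OF assms ps(1) l(2) ci_in] lne cine by blast
      have lv: "l \<in> verts H" using lp adj_verts[OF assms(1)] by blast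
      show ?thesis
      proof (cases "l \<in> c ` {..<n}")
        case True
        then obtain k where k: "k < n" "l = c k" by blast
        have "k = i" using common_nb[OF assms(2) i k(1)] lp ls k p_def s_def by simp
        then show ?thesis using False k by simp
      next
        case False
        then have "adj H l (c i)" using cyc_props(4)[OF assms(2) lv False i] lp ls p_def s_def by simp
        then show ?thesis using nli by simp
      qed
    qed
  qed
  show ?thesis unfolding cyc_def
    using n inj vs adjH gn assms(2) unfolding cyc_def by blast
qed



definition earx :: "'a graph \<Rightarrow> nat \<Rightarrow> (nat \<Rightarrow> 'a) \<Rightarrow> nat \<Rightarrow> nat \<Rightarrow> 'a \<Rightarrow> bool" where
  "earx H n c a b z \<longleftrightarrow> z \<in> verts H \<and> z \<notin> c ` {..<n} \<and> (\<forall>k<n. adj H z (c k) \<longleftrightarrow> (k = a \<or> k = b))"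

definition clique :: "'a graph \<Rightarrow> 'a set \<Rightarrow> bool" where
  "clique H Q \<longleftrightarrow> (\<forall>x\<in>Q. \<forall>y\<in>Q. x \<noteq> y \<longrightarrow> adj H x y)"

definition clean :: "'a graph \<Rightarrow> (nat \<Rightarrow> 'a) \<Rightarrow> 'a set \<Rightarrow> bool" where
  "clean H c Q \<longleftrightarrow> (\<forall>p\<in>verts H. \<forall>z\<in>Q. adj H p z \<longrightarrow> adj H p (c 0) \<longrightarrow> adj H p (c 3) \<longrightarrow>
      adj H p (c 1) \<or> adj H p (c 2))"

lemma tab:
  assumes "cyc H n c" "k < n"
  shows "adj H (c k) (c 0) \<longleftrightarrow> k = 1 \<or> k = n - 1"
    "adj H (c k) (c 1) \<longleftrightarrow> k = 0 \<or> k = 2"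
    "adj H (c k) (c 2) \<longleftrightarrow> k = 1 \<or> k = 3"
    "adj H (c k) (c 3) \<longleftrightarrow> k = 2 \<or> k = 4"
proof -
  have n: "5 \<le> n" using cyc_props(1)[OF assms(1)] .
  show "adj H (c k) (c 0) \<longleftrightarrow> k = 1 \<or> k = n - 1" using cyc_adj[OF assms(1) assms(2), of 0] n by auto
  show "adj H (c k) (c 1) \<longleftrightarrow> k = 0 \<or> k = 2" using cyc_adj[OF assms(1) assms(2), of 1] n by auto
  show "adj H (c k) (c 2) \<longleftrightarrow> k = 1 \<or> k = 3" using cyc_adj[OF assms(1) assms(2), of 2] n by auto
  show "adj H (c k) (c 3) \<longleftrightarrow> k = 2 \<or> k = 4" using cyc_adj[OF assms(1) assms(2), of 3] n by auto
qed

lemma tab0: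
  assumes "cyc H n c"
  shows "adj H (c 0) (c 1)" "adj H (c 1) (c 2)" "adj H (c 2) (c 3)"
    "\<not> adj H (c 0) (c 2)" "\<not> adj H (c 0) (c 3)" "\<not> adj H (c 1) (c 3)"
    "c 0 \<noteq> c 1" "c 0 \<noteq> c 2" "c 0 \<noteq> c 3" "c 1 \<noteq> c 2" "c 1 \<noteq> c 3" "c 2 \<noteq> c 3"
proof -
  have n: "5 \<le> n" using cyc_props(1)[OF assms(1)] .
  show "adj H (c 0) (c 1)" "adj H (c 1) (c 2)" "adj H (c 2) (c 3)"
    "\<not> adj H (c 0) (c 2)" "\<not> adj H (c 0) (c 3)" "\<not> adj H (c 1) (c 3)"
    using tab[OF assms, of 0] tab[OF assms, of 1] tab[OF assms, of 2] n by auto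
  show "c 0 \<noteq> c 1" "c 0 \<noteq> c 2" "c 0 \<noteq> c 3" "c 1 \<noteq> c 2" "c 1 \<noteq> c 3" "c 2 \<noteq> c 3"
    using cyc_inj[OF assms] n by auto
qed

lemma gn12:
  assumes "cyc H n c" "v \<in> verts H" "v \<notin> c ` {..<n}"
  shows "adj H v (c 0) \<Longrightarrow> adj H v (c 2) \<Longrightarrow> adj H v (c 1)"
    "adj H v (c 1) \<Longrightarrow> adj H v (c 3) \<Longrightarrow> adj H v (c 2)"
proof -
  have n: "5 \<le> n" using cyc_props(1)[OF assms(1)] .
  have e1: "(1 + n - 1) mod n = 0" "(1 + 1) mod n = 2" using n by auto
  have ee: "2 + n - 1 = 1 + n" by simp
  have "(1 + n) mod n = 1 mod n" by (rule mod_add_self2)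
  also have "\<dots> = 1" using n by simp
  finally have e2: "(2 + n - 1) mod n = 1" "(2 + 1) mod n = 3" unfolding ee using n by auto
  show "adj H v (c 0) \<Longrightarrow> adj H v (c 2) \<Longrightarrow> adj H v (c 1)"
    using cyc_props(4)[OF assms(1) assms(2,3), of 1, unfolded e1] n by linarith
  show "adj H v (c 1) \<Longrightarrow> adj H v (c 3) \<Longrightarrow> adj H v (c 2)"
    using cyc_props(4)[OF assms(1) assms(2,3), of 2, unfolded e2] n by linarith
qed

lemma earx_adj:
  assumes "earx H n c a b z" "k < n"
  shows "adj H (c k) z \<longleftrightarrow> k = a \<or> k = b" "adj H z (c k) \<longleftrightarrow> k = a \<or> k = b"
  using assms adj_sym unfolding earx_def by metis+

lemma ear_KBe:
  assumes "wf_graph H" "cyc H n c" "a + 1 < n" "is_biclique H B" "c a \<in> B" "c (a + 1) \<in> B"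
    "\<forall>k<n. c k \<in> B \<longrightarrow> k = a \<or> k = a + 1"
  shows "earx (KBe H) n (cp H n c) a (a + 1) B"
proof -
  have n: "5 \<le> n" using cyc_props(1)[OF assms(2)] .
  have an: "a < n" using assms(3) by simp
  have notcp: "B \<noteq> cp H n c k" if k: "k < n" for k
  proof
    assume "B = cp H n c k"
    then have "c ((k + n - 1) mod n) \<in> B" "c k \<in> B" "c ((k + 1) mod n) \<in> B"
      using cp_spec(2)[OF assms(1,2) k] by auto
    then have "(k + n - 1) mod n \<in> {a, a+1}" "k \<in> {a, a+1}" "(k + 1) mod n \<in> {a, a+1}"
      using assms(7) idx[OF k n] k by auto
    then show False using idx[OF k n] by auto
  qed
  have "adj (KBe H) B (cp H n c k) \<longleftrightarrow> (k = a \<or> k = a + 1)" if k: "k < n" for k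
  proof
    assume "adj (KBe H) B (cp H n c k)"
    then show "k = a \<or> k = a + 1" using adj_cp_center[OF assms(1,2) k] assms(7) k by blast
  next
    assume "k = a \<or> k = a + 1"
    moreover have "c a \<in> cp H n c a" "c (a+1) \<in> cp H n c a"
      using cp_spec(2)[OF assms(1,2) an] assms(3) by auto
    moreover have "c a \<in> cp H n c (a+1)" "c (a+1) \<in> cp H n c (a+1)"
    proof -
      have "(a + 1 + n - 1) mod n = a" using an by simp
      then show "c a \<in> cp H n c (a+1)" "c (a+1) \<in> cp H n c (a+1)"
        using cp_spec(2)[OF assms(1,2) assms(3)] by auto
    qed
    moreover have "adj H (c a) (c (a+1))" using assms(2,3) an unfolding cyc_def by auto
    ultimately show "adj (KBe H) B (cp H n c k)"
      using adj_KBe_intro[OF assms(1) assms(4) cp_spec(1)[OF assms(1,2)] notcp] assms(5,6) k by blast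
  qed
  moreover have "B \<in> verts (KBe H)" unfolding verts_KBe using assms(4) by blast
  moreover have "B \<notin> cp H n c ` {..<n}" using notcp by blast
  ultimately show ?thesis unfolding earx_def using adj_sym by metis
qed



definition star3 :: "'a graph \<Rightarrow> 'a \<Rightarrow> 'a \<Rightarrow> 'a \<Rightarrow> 'a set" where
  "star3 H m a b = (SOME B. is_biclique H B \<and> {m, a, b} \<subseteq> B)"

lemma star3_spec:
  assumes "wf_graph H" "adj H m a" "adj H m b" "\<not> adj H a b" "a \<noteq> b"
  shows "is_biclique H (star3 H m a b)" "m \<in> star3 H m a b" "a \<in> star3 H m a b" "b \<in> star3 H m a b"
proof -
  have "\<exists>B. is_biclique H B \<and> {m, a, b} \<subseteq> B"
    using exists_biclique[OF assms(1) icb_star3[OF assms(2-5) assms(1)]] .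
  then have "is_biclique H (star3 H m a b) \<and> {m, a, b} \<subseteq> star3 H m a b"
    unfolding star3_def by (rule someI_ex)
  then show "is_biclique H (star3 H m a b)" "m \<in> star3 H m a b" "a \<in> star3 H m a b" "b \<in> star3 H m a b"
    by auto
qed

lemma earx_ne:
  assumes "cyc H n c" "earx H n c a b z" "k < n"
  shows "z \<noteq> c k"
  using assms unfolding earx_def by blast

lemma cap1:
  assumes "wf_graph H" "cyc H n c" "is_biclique H B" "c 1 \<in> B" "c 0 \<in> B" "z \<in> B" "earx H n c 1 2 z"
  shows "\<forall>k<n. c k \<in> B \<longrightarrow> k = 0 \<or> k = 1"
proof (intro allI impI)
  fix k assume k: "k < n" "c k \<in> B"
  have n: "5 \<le> n" using cyc_props(1)[OF assms(2)] .
  have z0: "\<not> adj H (c 0) z" using earx_adj(1)[OF assms(7), of 0] n by simp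
  have p1: "adj H (c k) (c 1) \<longleftrightarrow> (adj H (c k) (c 0) \<longleftrightarrow> \<not> adj H (c 0) (c 1))"
    using bic_parity[OF assms(3) k(2) assms(5) assms(4) assms(1)] .
  have p2: "adj H (c k) z \<longleftrightarrow> (adj H (c k) (c 0) \<longleftrightarrow> \<not> adj H (c 0) z)"
    using bic_parity[OF assms(3) k(2) assms(5) assms(6) assms(1)] .
  show "k = 0 \<or> k = 1"
    using p1 p2 z0 tab0[OF assms(2)] tab[OF assms(2) k(1)] earx_adj(1)[OF assms(7) k(1)] n by auto
qed

lemma cap2:
  assumes "wf_graph H" "cyc H n c" "is_biclique H B" "c 2 \<in> B" "c 3 \<in> B" "z \<in> B" "earx H n c 1 2 z"
  shows "\<forall>k<n. c k \<in> B \<longrightarrow> k = 2 \<or> k = 2 + 1"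
proof (intro allI impI)
  fix k assume k: "k < n" "c k \<in> B"
  have n: "5 \<le> n" using cyc_props(1)[OF assms(2)] .
  have z3: "\<not> adj H (c 3) z" using earx_adj(1)[OF assms(7), of 3] n by simp
  have p1: "adj H (c k) (c 3) \<longleftrightarrow> (adj H (c k) (c 2) \<longleftrightarrow> \<not> adj H (c 2) (c 3))"
    using bic_parity[OF assms(3) k(2) assms(4) assms(5) assms(1)] .
  have p2: "adj H (c k) z \<longleftrightarrow> (adj H (c k) (c 3) \<longleftrightarrow> \<not> adj H (c 3) z)"
    using bic_parity[OF assms(3) k(2) assms(5) assms(6) assms(1)] .
  show "k = 2 \<or> k = 2 + 1"
    using p1 p2 z3 tab0[OF assms(2)] tab[OF assms(2) k(1)] earx_adj(1)[OF assms(7) k(1)] n by auto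
qed

lemma cap3:
  assumes "wf_graph H" "cyc H n c" "is_biclique H B" "c 1 \<in> B" "c 2 \<in> B" "z \<in> B" "earx H n c 0 1 z"
  shows "\<forall>k<n. c k \<in> B \<longrightarrow> k = 1 \<or> k = 1 + 1"
proof (intro allI impI)
  fix k assume k: "k < n" "c k \<in> B"
  have n: "5 \<le> n" using cyc_props(1)[OF assms(2)] .
  have z2: "\<not> adj H (c 2) z" using earx_adj(1)[OF assms(7), of 2] n by simp
  have p1: "adj H (c k) (c 2) \<longleftrightarrow> (adj H (c k) (c 1) \<longleftrightarrow> \<not> adj H (c 1) (c 2))"
    using bic_parity[OF assms(3) k(2) assms(4) assms(5) assms(1)] .
  have p2: "adj H (c k) z \<longleftrightarrow> (adj H (c k) (c 2) \<longleftrightarrow> \<not> adj H (c 2) z)"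
    using bic_parity[OF assms(3) k(2) assms(5) assms(6) assms(1)] .
  show "k = 1 \<or> k = 1 + 1"
    using p1 p2 z2 tab0[OF assms(2)] tab[OF assms(2) k(1)] earx_adj(1)[OF assms(7) k(1)] n by auto
qed

lemma cap4:
  assumes "wf_graph H" "cyc H n c" "is_biclique H B" "c 1 \<in> B" "c 2 \<in> B" "z \<in> B" "earx H n c 2 3 z"
  shows "\<forall>k<n. c k \<in> B \<longrightarrow> k = 1 \<or> k = 1 + 1"
proof (intro allI impI)
  fix k assume k: "k < n" "c k \<in> B"
  have n: "5 \<le> n" using cyc_props(1)[OF assms(2)] .
  have z1: "\<not> adj H (c 1) z" using earx_adj(1)[OF assms(7), of 1] n by simp
  have p1: "adj H (c k) (c 2) \<longleftrightarrow> (adj H (c k) (c 1) \<longleftrightarrow> \<not> adj H (c 1) (c 2))"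
    using bic_parity[OF assms(3) k(2) assms(4) assms(5) assms(1)] .
  have p2: "adj H (c k) z \<longleftrightarrow> (adj H (c k) (c 1) \<longleftrightarrow> \<not> adj H (c 1) z)"
    using bic_parity[OF assms(3) k(2) assms(4) assms(6) assms(1)] .
  show "k = 1 \<or> k = 1 + 1"
    using p1 p2 z1 tab0[OF assms(2)] tab[OF assms(2) k(1)] earx_adj(1)[OF assms(7) k(1)] n by auto
qed



lemma cp_small:
  assumes "wf_graph H" "cyc H n c"
  shows "c 0 \<in> cp H n c 0" "c 1 \<in> cp H n c 0"
    "c 0 \<in> cp H n c 1" "c 1 \<in> cp H n c 1" "c 2 \<in> cp H n c 1"
    "c 1 \<in> cp H n c 2" "c 2 \<in> cp H n c 2" "c 3 \<in> cp H n c 2"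
    "c 2 \<in> cp H n c 3" "c 3 \<in> cp H n c 3"
proof -
  have n: "5 \<le> n" using cyc_props(1)[OF assms(2)] .
  have e1: "(1 + n - 1) mod n = 0" "(1 + 1) mod n = 2" using n by auto
  show "c 0 \<in> cp H n c 1" "c 1 \<in> cp H n c 1" "c 2 \<in> cp H n c 1"
    using cp_spec(2)[OF assms, of 1, unfolded e1] n by auto
  have e0: "(0 + 1) mod n = 1" using n by auto
  show "c 0 \<in> cp H n c 0" "c 1 \<in> cp H n c 0" using cp_spec(2)[OF assms, of 0, unfolded e0] n by auto
  have ee: "2 + n - 1 = 1 + n" by simp
  have "(1 + n) mod n = 1 mod n" by (rule mod_add_self2)
  also have "\<dots> = 1" using n by simp
  finally have e2: "(2 + n - 1) mod n = 1" "(2 + 1) mod n = 3" unfolding ee using n by auto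
  show "c 1 \<in> cp H n c 2" "c 2 \<in> cp H n c 2" "c 3 \<in> cp H n c 2"
    using cp_spec(2)[OF assms, of 2, unfolded e2] n by auto
  have ee3: "3 + n - 1 = 2 + n" by simp
  have "(2 + n) mod n = 2 mod n" by (rule mod_add_self2)
  also have "\<dots> = 2" using n by simp
  finally have e3: "(3 + n - 1) mod n = 2" unfolding ee3 .
  show "c 2 \<in> cp H n c 3" "c 3 \<in> cp H n c 3" using cp_spec(2)[OF assms, of 3, unfolded e3] n by auto
qed

lemma clean_KBe:
  assumes "wf_graph H" "cyc H n c" "is_biclique H Z" "c 1 \<in> Z" "c 2 \<in> Z"
    "\<forall>k<n. c k \<in> Z \<longrightarrow> k = 1 \<or> k = 1 + 1"
    "adj (KBe H) p Z" "adj (KBe H) p (cp H n c 0)" "adj (KBe H) p (cp H n c 3)"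
  shows "adj (KBe H) p (cp H n c 1) \<or> adj (KBe H) p (cp H n c 2)"
proof (rule ccontr)
  assume na: "\<not> (adj (KBe H) p (cp H n c 1) \<or> adj (KBe H) p (cp H n c 2))"
  have n: "5 \<le> n" using cyc_props(1)[OF assms(2)] .
  have n4: "0 < n" "1 < n" "2 < n" "3 < n" using n by auto
  have cK: "cyc (KBe H) n (cp H n c)" using cyc_KBe[OF assms(1,2)] .
  note T = tab0[OF cK]
  note CS = cp_small[OF assms(1,2)]
  have pb: "is_biclique H p" using assms(7) adj_KBe[OF assms(1)] by blast
  have c0: "c 0 \<in> p" using adj_cp_center[OF assms(1,2) n4(1) assms(8)] .
  have c3: "c 3 \<in> p" using adj_cp_center[OF assms(1,2) n4(4) assms(9)] .
  have c1: "c 1 \<notin> p"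
  proof
    assume c1: "c 1 \<in> p"
    show False
    proof (cases "p = cp H n c 1")
      case True then show ?thesis using assms(9) T(6) by simp
    next
      case False
      have "adj (KBe H) p (cp H n c 1)"
        using adj_KBe_intro[OF assms(1) pb cp_spec(1)[OF assms(1,2) n4(2)] False c0 CS(3) c1 CS(4) tab0(1)[OF assms(2)]] .
      then show ?thesis using na by blast
    qed
  qed
  have c2: "c 2 \<notin> p"
  proof
    assume c2: "c 2 \<in> p"
    show False
    proof (cases "p = cp H n c 2")
      case True then show ?thesis using assms(8) T(4) adj_sym by metis
    next
      case False
      have "adj (KBe H) p (cp H n c 2)"
        using adj_KBe_intro[OF assms(1) pb cp_spec(1)[OF assms(1,2) n4(3)] False c2 CS(7) c3 CS(8) tab0(3)[OF assms(2)]] .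
      then show ?thesis using na by blast
    qed
  qed
  have notC: "w \<notin> c ` {..<n}" if w: "w \<in> p" "w \<in> Z" for w
  proof
    assume "w \<in> c ` {..<n}"
    then obtain k where k: "k < n" "w = c k" by blast
    then have "k = 1 \<or> k = 2" using assms(6) w by auto
    then show False using c1 c2 w k by auto
  qed
  have key: "False" if w: "w \<in> p" "w \<in> Z" "adj H w (c 0)" for w
  proof -
    have wv: "w \<in> verts H" using w(3) adj_verts[OF assms(1)] by blast
    have nC: "w \<notin> c ` {..<n}" using notC w by blast
    have w3: "adj H w (c 3)"
      using bic_parity[OF pb w(1) c0 c3 assms(1)] w(3) tab0(5)[OF assms(2)] by blast
    have w12: "adj H w (c 2) \<longleftrightarrow> \<not> adj H w (c 1)"
      using bic_parity[OF assms(3) w(2) assms(4) assms(5) assms(1)] tab0(2)[OF assms(2)] by blast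
    show False using gn12[OF assms(2) wv nC] w(3) w3 w12 by blast
  qed
  obtain u v where uv: "u \<in> p" "u \<in> Z" "v \<in> p" "v \<in> Z" "adj H u v"
    using assms(7) adj_KBe[OF assms(1)] unfolding shares_def by blast
  show False
  proof (cases "adj H u (c 0)")
    case True then show ?thesis using key uv by blast
  next
    case False
    have "adj H v (c 0)" using bic_parity[OF pb uv(3) uv(1) c0 assms(1)] uv(5) False adj_sym by metis
    then show ?thesis using key uv by blast
  qed
qed

lemma step1_nonadj:
  assumes "wf_graph H" "cyc H n c" "earx H n c 1 2 z" "clean H c Q" "z \<in> Q"
    "is_biclique H L" "c 1 \<in> L" "c 0 \<in> L" "z \<in> L" "\<forall>k<n. c k \<in> L \<longrightarrow> k = 0 \<or> k = 1"
    "is_biclique H R" "c 2 \<in> R" "c 3 \<in> R" "\<forall>k<n. c k \<in> R \<longrightarrow> k = 2 \<or> k = 2 + 1"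
  shows "\<not> adj (KBe H) L R"
proof
  assume a: "adj (KBe H) L R"
  have n: "5 \<le> n" using cyc_props(1)[OF assms(2)] .
  have z1: "adj H (c 1) z" using earx_adj(1)[OF assms(3), of 1] n by simp
  have notC: "w \<notin> c ` {..<n}" if w: "w \<in> L" "w \<in> R" for w
  proof
    assume "w \<in> c ` {..<n}"
    then obtain k where k: "k < n" "w = c k" by blast
    then show False using assms(10,14) w by fastforce
  qed
  have key: "False" if w: "w \<in> L" "w \<in> R" "adj H w (c 3)" for w
  proof -
    have wv: "w \<in> verts H" using w(3) adj_verts[OF assms(1)] by blast
    have nC: "w \<notin> c ` {..<n}" using notC w by blast
    have w2: "\<not> adj H w (c 2)"
      using bic_parity[OF assms(11) w(2) assms(12) assms(13) assms(1)] w(3) tab0(3)[OF assms(2)] by blast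
    have w1: "\<not> adj H w (c 1)" using gn12(2)[OF assms(2) wv nC] w(3) w2 by blast
    have w0: "adj H w (c 0)"
      using bic_parity[OF assms(6) w(1) assms(8) assms(7) assms(1)] w1 tab0(1)[OF assms(2)] by blast
    have wz: "adj H w z"
      using bic_parity[OF assms(6) w(1) assms(7) assms(9) assms(1)] w1 z1 by blast
    show False using assms(4) assms(5) wv wz w0 w(3) w1 w2 unfolding clean_def by blast
  qed
  obtain u v where uv: "u \<in> L" "u \<in> R" "v \<in> L" "v \<in> R" "adj H u v"
    using a adj_KBe[OF assms(1)] unfolding shares_def by blast
  show False
  proof (cases "adj H u (c 3)")
    case True then show ?thesis using key uv by blast
  next
    case False
    have "adj H v (c 3)" using bic_parity[OF assms(11) uv(4) uv(2) assms(13) assms(1)] uv(5) False adj_sym by metis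
    then show ?thesis using key uv by blast
  qed
qed



lemma step1:
  assumes "wf_graph H" "cyc H n c" "Q \<subseteq> {z. earx H n c 1 2 z}" "clique H Q" "clean H c Q" "finite Q"
  shows "\<exists>A B. A \<subseteq> {z. earx (KBe H) n (cp H n c) 0 1 z} \<and> B \<subseteq> {z. earx (KBe H) n (cp H n c) 2 3 z} \<and>
     clique (KBe H) A \<and> clique (KBe H) B \<and> (\<forall>a\<in>A. \<forall>b\<in>B. \<not> adj (KBe H) a b) \<and>
     finite A \<and> finite B \<and> card A = card Q \<and> card B = card Q"
proof -
  have n: "5 \<le> n" using cyc_props(1)[OF assms(2)] .
  have n4: "0 < n" "1 < n" "2 < n" "3 < n" using n by auto
  note T = tab0[OF assms(2)]
  define Lf where "Lf z = star3 H (c 1) (c 0) z" for z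
  define Rf where "Rf z = star3 H (c 2) z (c 3)" for z
  have zf: "adj H (c 1) z" "adj H (c 2) z" "\<not> adj H (c 0) z" "\<not> adj H (c 3) z" "z \<noteq> c 0" "z \<noteq> c 3"
    if "z \<in> Q" for z
    using earx_adj(1)[of H n c 1 2 z] earx_ne[OF assms(2), of 1 2 z] that assms(3) n4 by auto
  have T10: "adj H (c 1) (c 0)" using T(1) adj_sym by metis
  have LS: "is_biclique H (Lf z)" "c 1 \<in> Lf z" "c 0 \<in> Lf z" "z \<in> Lf z" if "z \<in> Q" for z
    using star3_spec[OF assms(1) T10 zf(1)[OF that] zf(3)[OF that] zf(5)[OF that, symmetric]]
    unfolding Lf_def by auto
  have zf4: "\<not> adj H z (c 3)" if "z \<in> Q" for z using zf(4)[OF that] adj_sym by metis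
  have RS: "is_biclique H (Rf z)" "c 2 \<in> Rf z" "z \<in> Rf z" "c 3 \<in> Rf z" if "z \<in> Q" for z
    using star3_spec[OF assms(1) zf(2)[OF that] T(3) zf4[OF that] zf(6)[OF that]]
    unfolding Rf_def by auto
  have earQ: "earx H n c 1 2 z" if "z \<in> Q" for z using assms(3) that by blast
  have Lcap: "\<forall>k<n. c k \<in> Lf z \<longrightarrow> k = 0 \<or> k = 1" if "z \<in> Q" for z
    using cap1[OF assms(1,2) LS[OF that] earQ[OF that]] .
  have Rcap: "\<forall>k<n. c k \<in> Rf z \<longrightarrow> k = 2 \<or> k = 2 + 1" if "z \<in> Q" for z
    using cap2[OF assms(1,2) RS(1,2,4,3)[OF that] earQ[OF that]] .
  have Lear: "earx (KBe H) n (cp H n c) 0 1 (Lf z)" if "z \<in> Q" for z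
    using ear_KBe[OF assms(1,2), of 0 "Lf z"] n LS[OF that] Lcap[OF that] by simp
  have Rear: "earx (KBe H) n (cp H n c) 2 3 (Rf z)" if "z \<in> Q" for z
    using ear_KBe[OF assms(1,2), of 2 "Rf z"] n RS[OF that] Rcap[OF that] by simp
  have Linj: "inj_on Lf Q"
  proof (rule inj_onI)
    fix z z' assume z: "z \<in> Q" "z' \<in> Q" "Lf z = Lf z'"
    show "z = z'"
    proof (rule ccontr)
      assume ne: "z \<noteq> z'"
      have "adj H z z'" using assms(4) z ne unfolding clique_def by blast
      moreover have "z' \<in> Lf z" using LS(4)[OF z(2)] z(3) by simp
      moreover have "adj H z (c 1)" using zf(1)[OF z(1)] adj_sym by metis
      moreover have "adj H (c 1) z'" using zf(1)[OF z(2)] .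
      ultimately show False
        using bic_parity[OF LS(1)[OF z(1)] LS(4)[OF z(1)] LS(2)[OF z(1)] _ assms(1), of z'] by blast
    qed
  qed
  have Rinj: "inj_on Rf Q"
  proof (rule inj_onI)
    fix z z' assume z: "z \<in> Q" "z' \<in> Q" "Rf z = Rf z'"
    show "z = z'"
    proof (rule ccontr)
      assume ne: "z \<noteq> z'"
      have "adj H z z'" using assms(4) z ne unfolding clique_def by blast
      moreover have "z' \<in> Rf z" using RS(3)[OF z(2)] z(3) by simp
      moreover have "adj H z (c 2)" using zf(2)[OF z(1)] adj_sym by metis
      moreover have "adj H (c 2) z'" using zf(2)[OF z(2)] .
      ultimately show False
        using bic_parity[OF RS(1)[OF z(1)] RS(3)[OF z(1)] RS(2)[OF z(1)] _ assms(1), of z'] by blast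
    qed
  qed
  have Lcl: "clique (KBe H) (Lf ` Q)" unfolding clique_def
  proof (intro ballI impI)
    fix x y assume "x \<in> Lf ` Q" "y \<in> Lf ` Q" "x \<noteq> y"
    then obtain z z' where "z \<in> Q" "z' \<in> Q" "x = Lf z" "y = Lf z'" by blast
    then show "adj (KBe H) x y"
      using adj_KBe_intro[OF assms(1) LS(1)[of z] LS(1)[of z'] \<open>x \<noteq> y\<close>[unfolded \<open>x = Lf z\<close> \<open>y = Lf z'\<close>]
          LS(3)[of z] LS(3)[of z'] LS(2)[of z] LS(2)[of z'] T(1)] by simp
  qed
  have Rcl: "clique (KBe H) (Rf ` Q)" unfolding clique_def
  proof (intro ballI impI)
    fix x y assume "x \<in> Rf ` Q" "y \<in> Rf ` Q" "x \<noteq> y"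
    then obtain z z' where "z \<in> Q" "z' \<in> Q" "x = Rf z" "y = Rf z'" by blast
    then show "adj (KBe H) x y"
      using adj_KBe_intro[OF assms(1) RS(1)[of z] RS(1)[of z'] \<open>x \<noteq> y\<close>[unfolded \<open>x = Rf z\<close> \<open>y = Rf z'\<close>]
          RS(2)[of z] RS(2)[of z'] RS(4)[of z] RS(4)[of z'] T(3)] by simp
  qed
  have nadj: "\<forall>a\<in>Lf ` Q. \<forall>b\<in>Rf ` Q. \<not> adj (KBe H) a b"
  proof (intro ballI)
    fix a b assume "a \<in> Lf ` Q" "b \<in> Rf ` Q"
    then obtain z y where zy: "z \<in> Q" "y \<in> Q" "a = Lf z" "b = Rf y" by blast
    show "\<not> adj (KBe H) a b"
      using step1_nonadj[OF assms(1,2) earQ[OF zy(1)] assms(5) zy(1) LS[OF zy(1)] Lcap[OF zy(1)]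
          RS(1,2,4)[OF zy(2)] Rcap[OF zy(2)]] zy by simp
  qed
  have s1: "Lf ` Q \<subseteq> {z. earx (KBe H) n (cp H n c) 0 1 z}" using Lear by blast
  have s2: "Rf ` Q \<subseteq> {z. earx (KBe H) n (cp H n c) 2 3 z}" using Rear by blast
  have f: "finite (Lf ` Q)" "finite (Rf ` Q)" using assms(6) by auto
  show ?thesis
    apply (rule exI[of _ "Lf ` Q"], rule exI[of _ "Rf ` Q"])
    apply (intro conjI)
    by (fact s1 s2 Lcl Rcl nadj f card_image[OF Linj] card_image[OF Rinj])+
qed



lemma step2:
  assumes "wf_graph H" "cyc H n c" "A \<subseteq> {z. earx H n c 0 1 z}" "B \<subseteq> {z. earx H n c 2 3 z}"
    "clique H A" "clique H B" "\<forall>a\<in>A. \<forall>b\<in>B. \<not> adj H a b" "finite A" "finite B"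
  shows "\<exists>Q. Q \<subseteq> {z. earx (KBe H) n (cp H n c) 1 2 z} \<and> clique (KBe H) Q \<and>
     clean (KBe H) (cp H n c) Q \<and> finite Q \<and> card Q = card A + card B"
proof -
  have n: "5 \<le> n" using cyc_props(1)[OF assms(2)] .
  have n4: "0 < n" "1 < n" "2 < n" "3 < n" using n by auto
  note T = tab0[OF assms(2)]
  define Rf where "Rf a = star3 H (c 1) a (c 2)" for a
  define Lf where "Lf b = star3 H (c 2) (c 1) b" for b
  have earA: "earx H n c 0 1 a" if "a \<in> A" for a using assms(3) that by blast
  have earB: "earx H n c 2 3 b" if "b \<in> B" for b using assms(4) that by blast
  have af: "adj H (c 1) a" "\<not> adj H a (c 2)" "a \<noteq> c 2" "adj H a (c 1)" if "a \<in> A" for a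
    using earx_adj[OF earA[OF that], of 1] earx_adj[OF earA[OF that], of 2] earx_ne[OF assms(2) earA[OF that], of 2] n4 by auto
  have bf: "adj H (c 2) b" "\<not> adj H (c 1) b" "c 1 \<noteq> b" "adj H b (c 2)" if "b \<in> B" for b
    using earx_adj[OF earB[OF that], of 1] earx_adj[OF earB[OF that], of 2] earx_ne[OF assms(2) earB[OF that], of 1] n4 by auto
  have T21: "adj H (c 2) (c 1)" using T(2) adj_sym by metis
  have RS: "is_biclique H (Rf a)" "c 1 \<in> Rf a" "a \<in> Rf a" "c 2 \<in> Rf a" if "a \<in> A" for a
    using star3_spec[OF assms(1) af(1)[OF that] T(2) af(2)[OF that] af(3)[OF that]] unfolding Rf_def by auto
  have LS: "is_biclique H (Lf b)" "c 2 \<in> Lf b" "c 1 \<in> Lf b" "b \<in> Lf b" if "b \<in> B" for b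
    using star3_spec[OF assms(1) T21 bf(1)[OF that] bf(2)[OF that] bf(3)[OF that]] unfolding Lf_def by auto
  have Rcap: "\<forall>k<n. c k \<in> Rf a \<longrightarrow> k = 1 \<or> k = 1 + 1" if "a \<in> A" for a
    using cap3[OF assms(1,2) RS(1,2,4,3)[OF that] earA[OF that]] .
  have Lcap: "\<forall>k<n. c k \<in> Lf b \<longrightarrow> k = 1 \<or> k = 1 + 1" if "b \<in> B" for b
    using cap4[OF assms(1,2) LS(1,3,2,4)[OF that] earB[OF that]] .
  define Q where "Q = Rf ` A \<union> Lf ` B"
  have Qp: "is_biclique H X \<and> c 1 \<in> X \<and> c 2 \<in> X \<and> (\<forall>k<n. c k \<in> X \<longrightarrow> k = 1 \<or> k = 1 + 1)" if "X \<in> Q" for X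
    using that RS Rcap LS Lcap unfolding Q_def by blast
  have Qear: "Q \<subseteq> {z. earx (KBe H) n (cp H n c) 1 2 z}"
  proof
    fix X
    have e: "(1::nat) + 1 = 2" by simp
    assume X: "X \<in> Q"
    have "1 + 1 < n" using n by simp
    moreover have "c (1 + 1) \<in> X" unfolding e using Qp[OF X] by blast
    ultimately have "earx (KBe H) n (cp H n c) 1 (1 + 1) X"
      using ear_KBe[OF assms(1,2), of 1 X] Qp[OF X] by blast
    then show "X \<in> {z. earx (KBe H) n (cp H n c) 1 2 z}" unfolding e by blast
  qed
  have Qcl: "clique (KBe H) Q" unfolding clique_def
  proof (intro ballI impI)
    fix X Y assume "X \<in> Q" "Y \<in> Q" "X \<noteq> Y"
    then show "adj (KBe H) X Y"
      using adj_KBe_intro[OF assms(1), of X Y "c 1" "c 2"] Qp T(2) by blast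
  qed
  have Qclean: "clean (KBe H) (cp H n c) Q" unfolding clean_def
  proof (intro ballI impI)
    fix p X assume "p \<in> verts (KBe H)" "X \<in> Q" "adj (KBe H) p X" "adj (KBe H) p (cp H n c 0)" "adj (KBe H) p (cp H n c 3)"
    then show "adj (KBe H) p (cp H n c 1) \<or> adj (KBe H) p (cp H n c 2)"
      using clean_KBe[OF assms(1,2), of X p] Qp by blast
  qed
  have Rinj: "inj_on Rf A"
  proof (rule inj_onI)
    fix z z' assume z: "z \<in> A" "z' \<in> A" "Rf z = Rf z'"
    show "z = z'"
    proof (rule ccontr)
      assume ne: "z \<noteq> z'"
      have "adj H z z'" using assms(5) z ne unfolding clique_def by blast
      moreover have "z' \<in> Rf z" using RS(3)[OF z(2)] z(3) by simp
      ultimately show False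
        using bic_parity[OF RS(1)[OF z(1)] RS(3)[OF z(1)] RS(2)[OF z(1)] _ assms(1), of z'] af(4)[OF z(1)] af(1)[OF z(2)]
        by blast
    qed
  qed
  have Linj: "inj_on Lf B"
  proof (rule inj_onI)
    fix z z' assume z: "z \<in> B" "z' \<in> B" "Lf z = Lf z'"
    show "z = z'"
    proof (rule ccontr)
      assume ne: "z \<noteq> z'"
      have "adj H z z'" using assms(6) z ne unfolding clique_def by blast
      moreover have "z' \<in> Lf z" using LS(4)[OF z(2)] z(3) by simp
      ultimately show False
        using bic_parity[OF LS(1)[OF z(1)] LS(4)[OF z(1)] LS(2)[OF z(1)] _ assms(1), of z'] bf(4)[OF z(1)] bf(1)[OF z(2)]
        by blast
    qed
  qed
  have disj: "Rf ` A \<inter> Lf ` B = {}"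
  proof (rule ccontr)
    assume "Rf ` A \<inter> Lf ` B \<noteq> {}"
    then obtain a b where ab: "a \<in> A" "b \<in> B" "Rf a = Lf b" by blast
    have "b \<in> Rf a" using ab LS(4)[OF ab(2)] by simp
    then have "adj H a b"
      using bic_parity[OF RS(1)[OF ab(1)] RS(3)[OF ab(1)] RS(2)[OF ab(1)] _ assms(1), of b] af(4)[OF ab(1)] bf(2)[OF ab(2)]
      by blast
    then show False using assms(7) ab by blast
  qed
  have card: "card Q = card A + card B"
    unfolding Q_def using card_Un_disjoint[of "Rf ` A" "Lf ` B"] disj assms(8,9) card_image[OF Rinj] card_image[OF Linj]
    by simp
  have fin: "finite Q" unfolding Q_def using assms(8,9) by simp
  show ?thesis
    apply (rule exI[of _ Q])
    apply (intro conjI)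
    by (fact Qear Qcl Qclean fin card)+
qed



definition imgG :: "('a \<Rightarrow> 'b) \<Rightarrow> 'a graph \<Rightarrow> 'b graph" where
  "imgG f H = (f ` verts H, (\<lambda>e. f ` e) ` edges H)"

lemma relabel_img: "\<exists>f. inj_on f (verts H) \<and> relabel H = imgG f H" if "finite (verts H)"
proof -
  let ?f = "SOME f. bij_betw f (verts H) {..<card (verts H)}"
  have "\<exists>f. bij_betw f (verts H) {..<card (verts H)}"
    using ex_bij_betw_finite_nat[OF that] by (simp add: atLeast0LessThan)
  then have "bij_betw ?f (verts H) {..<card (verts H)}" by (rule someI_ex)
  then have "inj_on ?f (verts H)" by (rule bij_betw_imp_inj_on)
  moreover have "relabel H = imgG ?f H" unfolding relabel_def imgG_def Let_def by simp
  ultimately show ?thesis by blast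
qed

lemma img_verts: "verts (imgG f H) = f ` verts H" unfolding imgG_def verts_def by simp

lemma img_adj:
  assumes "wf_graph H" "inj_on f (verts H)" "u \<in> verts H" "v \<in> verts H"
  shows "adj (imgG f H) (f u) (f v) \<longleftrightarrow> adj H u v"
proof
  assume "adj (imgG f H) (f u) (f v)"
  then have "{f u, f v} \<in> (\<lambda>e. f ` e) ` edges H" unfolding adj_def imgG_def edges_def by simp
  then obtain e where e: "e \<in> edges H" "f ` e = {f u, f v}" by blast
  have "e \<subseteq> verts H" using e(1) assms(1) unfolding wf_graph_def by blast
  moreover have "{u, v} \<subseteq> verts H" using assms(3,4) by blast
  moreover have "f ` e = f ` {u, v}" using e(2) by simp
  ultimately have "e = {u, v}" using inj_on_image_eq_iff[OF assms(2)] by blast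
  then show "adj H u v" unfolding adj_def using e(1) by simp
next
  assume "adj H u v"
  then have "{u,v} \<in> edges H" unfolding adj_def .
  then have "f ` {u,v} \<in> (\<lambda>e. f ` e) ` edges H" by blast
  then show "adj (imgG f H) (f u) (f v)" unfolding adj_def imgG_def edges_def by simp
qed

lemma img_wf:
  assumes "wf_graph H" "inj_on f (verts H)"
  shows "wf_graph (imgG f H)"
proof -
  have "finite (verts (imgG f H))" using assms(1) unfolding img_verts wf_graph_def by blast
  moreover have "\<forall>e\<in>edges (imgG f H). e \<subseteq> verts (imgG f H) \<and> card e = 2"
  proof
    fix e' assume "e' \<in> edges (imgG f H)"
    then obtain e where e: "e \<in> edges H" "e' = f ` e" unfolding imgG_def edges_def by auto
    have s: "e \<subseteq> verts H" "card e = 2" using e(1) assms(1) unfolding wf_graph_def by blast+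
    have "card (f ` e) = card e" using card_image[OF inj_on_subset[OF assms(2) s(1)]] .
    then show "e' \<subseteq> verts (imgG f H) \<and> card e' = 2" using s e(2) unfolding img_verts by auto
  qed
  ultimately show ?thesis unfolding wf_graph_def by blast
qed

lemma img_card: "inj_on f (verts H) \<Longrightarrow> card (verts (imgG f H)) = card (verts H)"
  unfolding img_verts by (rule card_image)

lemma img_cyc:
  assumes "wf_graph H" "inj_on f (verts H)" "cyc H n c"
  shows "cyc (imgG f H) n (f \<circ> c)"
proof -
  have cv: "\<And>i. i < n \<Longrightarrow> c i \<in> verts H" using cyc_props(3)[OF assms(3)] .
  have n: "5 \<le> n" using cyc_props(1)[OF assms(3)] .
  have sub: "c ` {..<n} \<subseteq> verts H" using cv by blast
  have inj: "inj_on (f \<circ> c) {..<n}"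
    using comp_inj_on[OF cyc_props(2)[OF assms(3)] inj_on_subset[OF assms(2) sub]] .
  have vs: "(f \<circ> c) ` {..<n} \<subseteq> verts (imgG f H)" unfolding img_verts using sub by auto
  have ad: "\<forall>i<n. \<forall>j<n. adj (imgG f H) ((f \<circ> c) i) ((f \<circ> c) j) \<longleftrightarrow> (j = (i + 1) mod n \<or> i = (j + 1) mod n)"
    using img_adj[OF assms(1,2)] cv assms(3) unfolding cyc_def by simp
  have gn: "good_neighbours (imgG f H) n (f \<circ> c)" unfolding good_neighbours_def
  proof (intro ballI allI impI)
    fix v i assume v: "v \<in> verts (imgG f H) - (f \<circ> c) ` {..<n}" and i: "i < n"
      and a: "adj (imgG f H) v ((f \<circ> c) ((i + n - 1) mod n)) \<and> adj (imgG f H) v ((f \<circ> c) ((i + 1) mod n))"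
    obtain w where w: "w \<in> verts H" "v = f w" using v unfolding img_verts by blast
    have wn: "w \<notin> c ` {..<n}" using v w by auto
    note I = idx[OF i n]
    have "adj H w (c ((i + n - 1) mod n))" "adj H w (c ((i + 1) mod n))"
      using a w img_adj[OF assms(1,2) w(1) cv[OF I(1)]] img_adj[OF assms(1,2) w(1) cv[OF I(2)]] by auto
    then have "adj H w (c i)" using cyc_props(4)[OF assms(3) w(1) wn i] by blast
    then show "adj (imgG f H) v ((f \<circ> c) i)" using img_adj[OF assms(1,2) w(1) cv[OF i]] w by simp
  qed
  show ?thesis unfolding cyc_def using n inj vs ad gn by blast
qed

lemma img_earx:
  assumes "wf_graph H" "inj_on f (verts H)" "cyc H n c" "earx H n c a b z"
  shows "earx (imgG f H) n (f \<circ> c) a b (f z)"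
proof -
  have cv: "\<And>i. i < n \<Longrightarrow> c i \<in> verts H" using cyc_props(3)[OF assms(3)] .
  have z: "z \<in> verts H" "z \<notin> c ` {..<n}" using assms(4) unfolding earx_def by blast+
  have "f z \<notin> (f \<circ> c) ` {..<n}"
  proof
    assume "f z \<in> (f \<circ> c) ` {..<n}"
    then obtain k where "k < n" "f z = f (c k)" by auto
    then have "z = c k" using inj_onD[OF assms(2)] z(1) cv by blast
    then show False using z(2) \<open>k < n\<close> by blast
  qed
  moreover have "f z \<in> verts (imgG f H)" unfolding img_verts using z by blast
  moreover have "\<forall>k<n. adj (imgG f H) (f z) ((f \<circ> c) k) \<longleftrightarrow> (k = a \<or> k = b)"
    using img_adj[OF assms(1,2) z(1) cv] assms(4) unfolding earx_def by simp
  ultimately show ?thesis unfolding earx_def by blast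
qed

lemma img_clique:
  assumes "wf_graph H" "inj_on f (verts H)" "Q \<subseteq> verts H" "clique H Q"
  shows "clique (imgG f H) (f ` Q)"
  unfolding clique_def
proof (intro ballI impI)
  fix x y assume "x \<in> f ` Q" "y \<in> f ` Q" "x \<noteq> y"
  then obtain u v where uv: "u \<in> Q" "v \<in> Q" "x = f u" "y = f v" by blast
  then have "u \<noteq> v" using \<open>x \<noteq> y\<close> by blast
  then have "adj H u v" using assms(4) uv unfolding clique_def by blast
  moreover have "u \<in> verts H" "v \<in> verts H" using uv assms(3) by blast+
  ultimately show "adj (imgG f H) x y" using img_adj[OF assms(1,2)] uv by simp
qed

lemma img_clean:
  assumes "wf_graph H" "inj_on f (verts H)" "cyc H n c" "Q \<subseteq> verts H" "clean H c Q"
  shows "clean (imgG f H) (f \<circ> c) (f ` Q)"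
  unfolding clean_def
proof (intro ballI impI)
  fix p z assume p: "p \<in> verts (imgG f H)" and z: "z \<in> f ` Q"
    and a: "adj (imgG f H) p z" "adj (imgG f H) p ((f \<circ> c) 0)" "adj (imgG f H) p ((f \<circ> c) 3)"
  have n: "5 \<le> n" using cyc_props(1)[OF assms(3)] .
  have cv: "\<And>i. i < n \<Longrightarrow> c i \<in> verts H" using cyc_props(3)[OF assms(3)] .
  have cv4: "c 0 \<in> verts H" "c 1 \<in> verts H" "c 2 \<in> verts H" "c 3 \<in> verts H" using cv n by auto
  obtain w where w: "w \<in> verts H" "p = f w" using p unfolding img_verts by blast
  obtain u where u: "u \<in> Q" "z = f u" using z by blast
  have uv: "u \<in> verts H" using u assms(4) by blast
  have "adj H w u" "adj H w (c 0)" "adj H w (c 3)"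
    using a w u img_adj[OF assms(1,2) w(1) uv] img_adj[OF assms(1,2) w(1) cv4(1)] img_adj[OF assms(1,2) w(1) cv4(4)] by auto
  then have "adj H w (c 1) \<or> adj H w (c 2)" using assms(5) w(1) u(1) unfolding clean_def by blast
  then show "adj (imgG f H) p ((f \<circ> c) 1) \<or> adj (imgG f H) p ((f \<circ> c) 2)"
    using w img_adj[OF assms(1,2) w(1) cv4(2)] img_adj[OF assms(1,2) w(1) cv4(3)] by auto
qed



definition Inv0 :: "nat \<Rightarrow> 'a graph \<Rightarrow> bool" where
  "Inv0 n H \<longleftrightarrow> wf_graph H \<and> (\<exists>c x. cyc H n c \<and> earx H n c 0 1 x)"

definition Inv1 :: "nat \<Rightarrow> 'a graph \<Rightarrow> nat \<Rightarrow> bool" where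
  "Inv1 n H q \<longleftrightarrow> wf_graph H \<and> (\<exists>c Q. cyc H n c \<and> Q \<subseteq> {z. earx H n c 1 2 z} \<and> clique H Q \<and>
      clean H c Q \<and> finite Q \<and> q \<le> card Q)"

definition Inv2 :: "nat \<Rightarrow> 'a graph \<Rightarrow> nat \<Rightarrow> bool" where
  "Inv2 n H q \<longleftrightarrow> wf_graph H \<and> (\<exists>c A B. cyc H n c \<and> A \<subseteq> {z. earx H n c 0 1 z} \<and>
      B \<subseteq> {z. earx H n c 2 3 z} \<and> clique H A \<and> clique H B \<and> (\<forall>a\<in>A. \<forall>b\<in>B. \<not> adj H a b) \<and>
      finite A \<and> finite B \<and> q \<le> card A \<and> q \<le> card B)"

lemma Inv0_KBe: assumes "Inv0 n H" shows "Inv1 n (KBe H) 1"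
proof -
  obtain c x where cx: "wf_graph H" "cyc H n c" "earx H n c 0 1 x" using assms unfolding Inv0_def by blast
  have a1: "{x} \<subseteq> {z. earx H n c 0 1 z}" using cx(3) by blast
  have a2: "({} :: 'a set) \<subseteq> {z. earx H n c 2 3 z}" by blast
  have a3: "clique H {x}" "clique H ({} :: 'a set)" unfolding clique_def by blast+
  have a4: "\<forall>a\<in>{x}. \<forall>b\<in>({} :: 'a set). \<not> adj H a b" by blast
  obtain Q where Q: "Q \<subseteq> {z. earx (KBe H) n (cp H n c) 1 2 z}" "clique (KBe H) Q"
     "clean (KBe H) (cp H n c) Q" "finite Q" "card Q = card {x} + card ({} :: 'a set)"
    using step2[OF cx(1,2) a1 a2 a3 a4] by blast
  have "1 \<le> card Q" using Q(5) by simp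
  then show ?thesis unfolding Inv1_def using wf_KBe[OF cx(1)] cyc_KBe[OF cx(1,2)] Q(1-4) by blast
qed

lemma Inv1_KBe: assumes "Inv1 n H q" shows "Inv2 n (KBe H) q"
proof -
  obtain c Q where cQ: "wf_graph H" "cyc H n c" "Q \<subseteq> {z. earx H n c 1 2 z}" "clique H Q"
      "clean H c Q" "finite Q" "q \<le> card Q" using assms unfolding Inv1_def by blast
  obtain A B where AB: "A \<subseteq> {z. earx (KBe H) n (cp H n c) 0 1 z}" "B \<subseteq> {z. earx (KBe H) n (cp H n c) 2 3 z}"
     "clique (KBe H) A" "clique (KBe H) B" "(\<forall>a\<in>A. \<forall>b\<in>B. \<not> adj (KBe H) a b)"
     "finite A" "finite B" "card A = card Q" "card B = card Q"
    using step1[OF cQ(1-6)] by blast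
  show ?thesis unfolding Inv2_def
    using wf_KBe[OF cQ(1)] cyc_KBe[OF cQ(1,2)] AB cQ(7) by (intro conjI exI[of _ "cp H n c"] exI[of _ A] exI[of _ B]) auto
qed

lemma Inv2_KBe: assumes "Inv2 n H q" shows "Inv1 n (KBe H) (2 * q)"
proof -
  obtain c A B where cAB: "wf_graph H" "cyc H n c" "A \<subseteq> {z. earx H n c 0 1 z}"
      "B \<subseteq> {z. earx H n c 2 3 z}" "clique H A" "clique H B" "(\<forall>a\<in>A. \<forall>b\<in>B. \<not> adj H a b)"
      "finite A" "finite B" "q \<le> card A" "q \<le> card B" using assms unfolding Inv2_def by blast
  obtain Q where Q: "Q \<subseteq> {z. earx (KBe H) n (cp H n c) 1 2 z}" "clique (KBe H) Q"
     "clean (KBe H) (cp H n c) Q" "finite Q" "card Q = card A + card B"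
    using step2[OF cAB(1-9)] by blast
  show ?thesis unfolding Inv1_def
    using wf_KBe[OF cAB(1)] cyc_KBe[OF cAB(1,2)] Q cAB(10,11)
    by (intro conjI exI[of _ "cp H n c"] exI[of _ Q]) auto
qed

lemma wf_relabel: assumes "wf_graph H" obtains f where "inj_on f (verts H)" "relabel H = imgG f H"
  using relabel_img[of H] assms unfolding wf_graph_def by blast

lemma Inv0_relabel: assumes "Inv0 n H" shows "Inv0 n (relabel H)"
proof -
  obtain c x where cx: "wf_graph H" "cyc H n c" "earx H n c 0 1 x" using assms unfolding Inv0_def by blast
  obtain f where f: "inj_on f (verts H)" "relabel H = imgG f H" using wf_relabel[OF cx(1)] by blast
  show ?thesis unfolding Inv0_def f(2)
    using img_wf[OF cx(1) f(1)] img_cyc[OF cx(1) f(1) cx(2)] img_earx[OF cx(1) f(1) cx(2,3)] by blast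
qed

lemma Inv1_relabel: assumes "Inv1 n H q" shows "Inv1 n (relabel H) q"
proof -
  obtain c Q where cQ: "wf_graph H" "cyc H n c" "Q \<subseteq> {z. earx H n c 1 2 z}" "clique H Q"
      "clean H c Q" "finite Q" "q \<le> card Q" using assms unfolding Inv1_def by blast
  obtain f where f: "inj_on f (verts H)" "relabel H = imgG f H" using wf_relabel[OF cQ(1)] by blast
  have Qv: "Q \<subseteq> verts H" using cQ(3) unfolding earx_def by blast
  have "f ` Q \<subseteq> {z. earx (imgG f H) n (f \<circ> c) 1 2 z}" using img_earx[OF cQ(1) f(1) cQ(2)] cQ(3) by blast
  moreover have "card (f ` Q) = card Q" using card_image[OF inj_on_subset[OF f(1) Qv]] .
  ultimately show ?thesis unfolding Inv1_def f(2)
    using img_wf[OF cQ(1) f(1)] img_cyc[OF cQ(1) f(1) cQ(2)] img_clique[OF cQ(1) f(1) Qv cQ(4)]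
      img_clean[OF cQ(1) f(1) cQ(2) Qv cQ(5)] cQ(6,7)
    by (intro conjI exI[of _ "f \<circ> c"] exI[of _ "f ` Q"]) auto
qed

lemma Inv2_relabel: assumes "Inv2 n H q" shows "Inv2 n (relabel H) q"
proof -
  obtain c A B where cAB: "wf_graph H" "cyc H n c" "A \<subseteq> {z. earx H n c 0 1 z}"
      "B \<subseteq> {z. earx H n c 2 3 z}" "clique H A" "clique H B" "(\<forall>a\<in>A. \<forall>b\<in>B. \<not> adj H a b)"
      "finite A" "finite B" "q \<le> card A" "q \<le> card B" using assms unfolding Inv2_def by blast
  obtain f where f: "inj_on f (verts H)" "relabel H = imgG f H" using wf_relabel[OF cAB(1)] by blast
  have Av: "A \<subseteq> verts H" using cAB(3) unfolding earx_def by blast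
  have Bv: "B \<subseteq> verts H" using cAB(4) unfolding earx_def by blast
  have e1: "f ` A \<subseteq> {z. earx (imgG f H) n (f \<circ> c) 0 1 z}" using img_earx[OF cAB(1) f(1) cAB(2)] cAB(3) by blast
  have e2: "f ` B \<subseteq> {z. earx (imgG f H) n (f \<circ> c) 2 3 z}" using img_earx[OF cAB(1) f(1) cAB(2)] cAB(4) by blast
  have ca: "card (f ` A) = card A" using card_image[OF inj_on_subset[OF f(1) Av]] .
  have cb: "card (f ` B) = card B" using card_image[OF inj_on_subset[OF f(1) Bv]] .
  have na: "\<forall>a\<in>f ` A. \<forall>b\<in>f ` B. \<not> adj (imgG f H) a b"
  proof (intro ballI)
    fix a b assume "a \<in> f ` A" "b \<in> f ` B"
    then obtain a' b' where ab: "a' \<in> A" "b' \<in> B" "a = f a'" "b = f b'" by blast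
    have "a' \<in> verts H" "b' \<in> verts H" using ab Av Bv by blast+
    then show "\<not> adj (imgG f H) a b" using img_adj[OF cAB(1) f(1)] ab cAB(7) by simp
  qed
  show ?thesis unfolding Inv2_def f(2)
    using img_wf[OF cAB(1) f(1)] img_cyc[OF cAB(1) f(1) cAB(2)] img_clique[OF cAB(1) f(1) Av cAB(5)]
      img_clique[OF cAB(1) f(1) Bv cAB(6)] e1 e2 ca cb na cAB(8-11)
    by (intro conjI exI[of _ "f \<circ> c"] exI[of _ "f ` A"] exI[of _ "f ` B"]) auto
qed

lemma Inv1_card: "Inv1 n H q \<Longrightarrow> q \<le> card (verts H)"
proof -
  assume "Inv1 n H q"
  then obtain c Q where cQ: "wf_graph H" "Q \<subseteq> {z. earx H n c 1 2 z}" "q \<le> card Q"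
    unfolding Inv1_def by blast
  have "Q \<subseteq> verts H" using cQ(2) unfolding earx_def by blast
  moreover have "finite (verts H)" using cQ(1) unfolding wf_graph_def by blast
  ultimately show ?thesis using cQ(3) card_mono by (metis le_trans)
qed

lemma Inv2_card: "Inv2 n H q \<Longrightarrow> q \<le> card (verts H)"
proof -
  assume "Inv2 n H q"
  then obtain c A where cA: "wf_graph H" "A \<subseteq> {z. earx H n c 0 1 z}" "q \<le> card A"
    unfolding Inv2_def by blast
  have "A \<subseteq> verts H" using cA(2) unfolding earx_def by blast
  moreover have "finite (verts H)" using cA(1) unfolding wf_graph_def by blast
  ultimately show ?thesis using cA(3) card_mono by (metis le_trans)
qed



lemma necklace_Inv0:
  assumes "wf_graph G" "n \<ge> 5" "m \<ge> 1" "induced_necklace G n m c K" "good_neighbours G n c"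
  shows "Inv0 n G"
proof -
  have N: "inj_on c {..<n}" "c ` {..<n} \<subseteq> verts G" "K \<subseteq> verts G" "finite K" "card K = m"
      "K \<inter> c ` {..<n} = {}"
      "\<forall>i<n. \<forall>j<n. adj G (c i) (c j) \<longleftrightarrow> (j = (i + 1) mod n \<or> i = (j + 1) mod n)"
      "\<forall>x\<in>K. \<forall>i<n. adj G x (c i) \<longleftrightarrow> (i = 0 \<or> i = 1)"
    using assms(4) unfolding induced_necklace_def by blast+
  have cy: "cyc G n c" unfolding cyc_def using assms(2,5) N(1,2,7) by blast
  have "K \<noteq> {}" using N(4,5) assms(3) by auto
  then obtain x where x: "x \<in> K" by blast
  have "earx G n c 0 1 x" unfolding earx_def using x N(3,6,8) by blast
  then show ?thesis unfolding Inv0_def using assms(1) cy by blast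
qed

lemma iter_Suc: "KBe_iter (Suc t) G = relabel (KBe (KBe_iter t G))" by simp

lemma main_growth:
  assumes "Inv0 n G"
  shows "Inv1 n (KBe_iter (2 * k + 1) G) (2 ^ k) \<and> Inv2 n (KBe_iter (2 * k + 2) G) (2 ^ k)"
proof (induction k)
  case 0
  have a: "Inv0 n (KBe_iter 0 G)" using Inv0_relabel[OF assms] by simp
  have b: "Inv1 n (KBe_iter (Suc 0) G) 1"
    unfolding iter_Suc[of 0 G] using Inv1_relabel[OF Inv0_KBe[OF a]] .
  have c: "Inv2 n (KBe_iter (Suc (Suc 0)) G) 1"
    unfolding iter_Suc[of "Suc 0" G] using Inv2_relabel[OF Inv1_KBe[OF b]] .
  have e: "2 * 0 + 1 = Suc 0" "2 * 0 + 2 = Suc (Suc 0)" "(2::nat) ^ 0 = 1" by simp_all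
  show ?case unfolding e using b c by blast
next
  case (Suc k)
  have e1: "2 * Suc k + 1 = Suc (2 * k + 2)" by simp
  have e2: "2 * Suc k + 2 = Suc (2 * Suc k + 1)" by simp
  have b: "Inv1 n (KBe_iter (2 * Suc k + 1) G) (2 ^ Suc k)"
    using Inv1_relabel[OF Inv2_KBe[OF conjunct2[OF Suc.IH]]] iter_Suc[of "2 * k + 2" G] unfolding e1 by simp
  have c: "Inv2 n (KBe_iter (2 * Suc k + 2) G) (2 ^ Suc k)"
    using Inv2_relabel[OF Inv1_KBe[OF b]] iter_Suc[of "2 * Suc k + 1" G] unfolding e2 by simp
  show ?case using b c by blast
qed

lemma card_growth:
  assumes "Inv0 n G" "1 \<le> t"
  shows "(t - 1) div 2 \<le> card (verts (KBe_iter t G))"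
proof -
  define k where "k = (t - 1) div 2"
  have "t = 2 * k + 1 \<or> t = 2 * k + 2" unfolding k_def using assms(2) by presburger
  then have "2 ^ k \<le> card (verts (KBe_iter t G))"
    using main_growth[OF assms(1), of k] Inv1_card Inv2_card by metis
  moreover have "k < 2 ^ k" by (rule less_exp)
  ultimately show ?thesis unfolding k_def by linarith
qed

theorem mainTheorem11:
  fixes G :: "'a graph" and n m :: nat and c :: "nat \<Rightarrow> 'a" and K :: "'a set"
  assumes "wf_graph G"
    and "n \<ge> 5" and "m \<ge> 1"
    and "induced_necklace G n m c K"
    and "good_neighbours G n c"
  shows "filterlim (\<lambda>k. card (verts (KBe_iter k G))) at_top sequentially"
proof -
  have I0: "Inv0 n G" using necklace_Inv0[OF assms] .
  show ?thesis unfolding filterlim_at_top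
  proof
    fix Z :: nat
    have "\<forall>t\<ge>2 * Z + 1. Z \<le> card (verts (KBe_iter t G))"
    proof (intro allI impI)
      fix t assume t: "2 * Z + 1 \<le> t"
      then have "Z \<le> (t - 1) div 2" by linarith
      then show "Z \<le> card (verts (KBe_iter t G))" using card_growth[OF I0, of t] t by linarith
    qed
    then show "eventually (\<lambda>t. Z \<le> card (verts (KBe_iter t G))) sequentially"
      unfolding eventually_sequentially by blast
  qed
qed

end
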